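(* Let $((x_n,y_n))_{n\in\mathbb N}$ be a sequence in $[0,\infty)^2$ such that $\sum_n(x_n,y_n)$ converges, and assume that $(a,b)\times(c,d)$ is a rectangular gap of $E(x_n,y_n)$. Let $k:=\max\{n\in\mathbb N:\ x_n\geq b-a \text{ or } y_n\geq d-c\}$ (this set of indices is finite and non-empty). Then $(b,d)\in F_k$, and there exists $f\in F_k$ such that $(a,c)=f+\sum_{n>k}(x_n,y_n)$.
   Context: $E(x_n,y_n):=\{\sum_{n\in B}(x_n,y_n):\ B\subset\mathbb N\}$ is the achievement set of the series, and $F_k:=\{\sum_{i\in B}(x_i,y_i):\ B\subset\{1,\dots,k\}\}$ is the set of $k$-initial subsums. For $A\subset\mathbb R^2$ and reals $a<b$, $c<d$, the set $(a,b)\times(c,d)$ is a rectangular gap of $A$ if $([a,b]\times[c,d])\cap A=\{(a,c),(b,d)\}$. *)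

theory Defs
  imports "HOL-Analysis.Analysis"
begin

text \<open>Sequences are indexed from 0 (the paper's index n corresponds to n-1 here).
  A point of the plane is a pair of reals; the series (x_n,y_n) is given componentwise.\<close>

definition achievement_set :: "(nat \<Rightarrow> real) \<Rightarrow> (nat \<Rightarrow> real) \<Rightarrow> (real \<times> real) set" where
  "achievement_set x y =
     {((\<Sum>n. if n \<in> B then x n else 0), (\<Sum>n. if n \<in> B then y n else 0)) | B. B \<subseteq> (UNIV :: nat set)}"

definition initial_subsums :: "(nat \<Rightarrow> real) \<Rightarrow> (nat \<Rightarrow> real) \<Rightarrow> nat \<Rightarrow> (real \<times> real) set" where
  "initial_subsums x y k = {((\<Sum>i\<in>B. x i), (\<Sum>i\<in>B. y i)) | B. B \<subseteq> {..k}}"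

definition rectangular_gap :: "(real \<times> real) set \<Rightarrow> real \<Rightarrow> real \<Rightarrow> real \<Rightarrow> real \<Rightarrow> bool" where
  "rectangular_gap A a b c d \<longleftrightarrow>
     a < b \<and> c < d \<and> ({a..b} \<times> {c..d}) \<inter> A = {(a, c), (b, d)}"

end

theory Submission
  imports Defs
begin

lemma summ_if:
  fixes x :: "nat \<Rightarrow> real"
  assumes "summable x" "\<And>n. x n \<ge> 0"
  shows "summable (\<lambda>n. if Q n then x n else 0)"
  by (rule summable_comparison_test[OF _ assms(1)]) (use assms(2) in auto)

lemma S_remove:
  fixes x :: "nat \<Rightarrow> real"
  assumes "summable x" "\<And>n. x n \<ge> 0" "m \<in> B"
  shows "(\<Sum>n. if n \<in> B - {m} then x n else 0) = (\<Sum>n. if n \<in> B then x n else 0) - x m"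
proof -
  have e: "(\<lambda>n. if n \<in> B then x n else 0) = (\<lambda>n. (if n \<in> B - {m} then x n else 0) + (if n = m then x n else 0))"
    using assms(3) by auto
  have "(\<Sum>n. if n \<in> B then x n else 0) = (\<Sum>n. if n \<in> B - {m} then x n else 0) + (\<Sum>n. if n = m then x n else 0)"
    unfolding e by (rule suminf_add[symmetric]) (auto intro: summ_if[OF assms(1,2)] summable_single)
  moreover have "(\<Sum>n. if n = m then x n else 0) = x m" using sums_single[of m x] sums_unique by metis
  ultimately show ?thesis by simp
qed

lemma S_add:
  fixes x :: "nat \<Rightarrow> real"
  assumes "summable x" "\<And>n. x n \<ge> 0" "m \<notin> B"
  shows "(\<Sum>n. if n \<in> insert m B then x n else 0) = (\<Sum>n. if n \<in> B then x n else 0) + x m"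
proof -
  have "(\<Sum>n. if n \<in> insert m B - {m} then x n else 0) = (\<Sum>n. if n \<in> insert m B then x n else 0) - x m"
    by (rule S_remove[OF assms(1,2)]) auto
  moreover have "insert m B - {m} = B" using assms(3) by auto
  ultimately show ?thesis by simp
qed

theorem mainTheorem17:
  fixes x y :: "nat \<Rightarrow> real" and a b c d :: real
  assumes nonneg: "\<And>n. x n \<ge> 0 \<and> y n \<ge> 0"
    and conv: "summable x" "summable y"
    and gap: "rectangular_gap (achievement_set x y) a b c d"
  shows "finite {n. x n \<ge> b - a \<or> y n \<ge> d - c}
     \<and> {n. x n \<ge> b - a \<or> y n \<ge> d - c} \<noteq> {}
     \<and> (let k = Max {n. x n \<ge> b - a \<or> y n \<ge> d - c} in
          (b, d) \<in> initial_subsums x y k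
          \<and> (\<exists>f \<in> initial_subsums x y k.
               (a, c) = f + ((\<Sum>n. x (n + Suc k)), (\<Sum>n. y (n + Suc k)))))"
proof -
  have xn: "\<And>n. x n \<ge> 0" and yn: "\<And>n. y n \<ge> 0" using nonneg by auto
  define S where "S = (\<lambda>(z::nat\<Rightarrow>real) B. (\<Sum>n. if n \<in> B then z n else 0))"
  have memE: "(p, q) \<in> achievement_set x y \<longleftrightarrow> (\<exists>B. p = S x B \<and> q = S y B)" for p q
    unfolding achievement_set_def S_def by auto
  have ab: "a < b" and cd: "c < d" and rect: "({a..b} \<times> {c..d}) \<inter> achievement_set x y = {(a, c), (b, d)}"
    using gap unfolding rectangular_gap_def by auto
  have "(a, c) \<in> achievement_set x y" "(b, d) \<in> achievement_set x y" using rect by blast+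
  then obtain A B where A: "a = S x A" "c = S y A" and B: "b = S x B" "d = S y B" unfolding memE by blast
  have a0: "a \<ge> 0" unfolding A S_def by (rule suminf_nonneg[OF summ_if[OF conv(1) xn]]) (use xn in auto)
  define P where "P = (\<lambda>n. x n \<ge> b - a \<or> y n \<ge> d - c)"
  have claim1: "x n = 0 \<and> y n = 0" if "n \<in> B" "\<not> P n" for n
  proof (rule ccontr)
    assume nz: "\<not> (x n = 0 \<and> y n = 0)"
    have "(S x (B - {n}), S y (B - {n})) \<in> achievement_set x y" using memE by blast
    moreover have "S x (B - {n}) = b - x n" "S y (B - {n}) = d - y n"
      unfolding B S_def by (rule S_remove; use that conv xn yn in auto)+
    ultimately have "(b - x n, d - y n) \<in> ({a..b} \<times> {c..d}) \<inter> achievement_set x y"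
      using that xn[of n] yn[of n] unfolding P_def by simp
    then have "(b - x n, d - y n) \<in> {(a, c), (b, d)}" by (simp only: rect)
    then show False using nz that unfolding P_def by simp
  qed
  have claim2: "x n = 0 \<and> y n = 0" if "n \<notin> A" "\<not> P n" for n
  proof (rule ccontr)
    assume nz: "\<not> (x n = 0 \<and> y n = 0)"
    have "(S x (insert n A), S y (insert n A)) \<in> achievement_set x y" using memE by blast
    moreover have "S x (insert n A) = a + x n" "S y (insert n A) = c + y n"
      unfolding A S_def by (rule S_add; use that conv xn yn in auto)+
    ultimately have "(a + x n, c + y n) \<in> ({a..b} \<times> {c..d}) \<inter> achievement_set x y"
      using that xn[of n] yn[of n] unfolding P_def by simp
    then have "(a + x n, c + y n) \<in> {(a, c), (b, d)}" by (simp only: rect)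
    then show False using nz that unfolding P_def by simp
  qed
  have fin: "finite {n. P n}"
  proof -
    have "eventually (\<lambda>n. x n < b - a) sequentially"
      using summable_LIMSEQ_zero[OF conv(1)] ab by (simp add: order_tendstoD(2))
    moreover have "eventually (\<lambda>n. y n < d - c) sequentially"
      using summable_LIMSEQ_zero[OF conv(2)] cd by (simp add: order_tendstoD(2))
    ultimately obtain N where N: "\<And>n. n \<ge> N \<Longrightarrow> x n < b - a \<and> y n < d - c"
      unfolding eventually_sequentially by (metis (no_types) eventually_conj eventually_sequentially)
    have "{n. P n} \<subseteq> {..<N}" using N unfolding P_def by (auto simp: not_less[symmetric])
    then show ?thesis using finite_subset by blast
  qed
  have ne: "{n. P n} \<noteq> {}"
  proof
    assume emp: "{n. P n} = {}"
    have "\<forall>n. (if n \<in> B then x n else 0) = 0" using claim1 emp by auto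
    then have "b = 0" unfolding B S_def by simp
    then show False using a0 ab by simp
  qed
  define k where "k = Max {n. P n}"
  have gtk: "\<not> P n" if "n > k" for n
    using Max_ge[OF fin, of n] that unfolding k_def by auto
  have bd: "(b, d) \<in> initial_subsums x y k"
  proof -
    have "S z B = sum z (B \<inter> {..k})" if "\<And>n. n \<in> B \<Longrightarrow> n > k \<Longrightarrow> z n = 0" for z
      unfolding S_def
      by (subst suminf_finite[of "B \<inter> {..k}"]) (use that in \<open>auto intro!: sum.cong simp: not_le\<close>)
    then have "b = sum x (B \<inter> {..k})" "d = sum y (B \<inter> {..k})"
      using B claim1 gtk by auto
    then show ?thesis unfolding initial_subsums_def by blast
  qed
  have tail: "S z A = sum z (A \<inter> {..k}) + (\<Sum>n. z (n + Suc k))"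
    if z: "summable z" "\<And>n. z n \<ge> 0" "\<And>n. n \<notin> A \<Longrightarrow> n > k \<Longrightarrow> z n = 0" for z
  proof -
    have e: "(\<lambda>n. if n \<in> A then z n else 0) = (\<lambda>n. (if n \<in> A \<inter> {..k} then z n else 0) + (if n > k then z n else 0))"
      using z(3) by (auto simp: not_le)
    have s1: "summable (\<lambda>n. if n \<in> A \<inter> {..k} then z n else 0)" by (rule summ_if[OF z(1,2)])
    have s2: "summable (\<lambda>n. if n > k then z n else 0)" by (rule summ_if[OF z(1,2)])
    have f1: "(\<Sum>n. if n \<in> A \<inter> {..k} then z n else 0) = sum z (A \<inter> {..k})"
      by (subst suminf_finite[of "A \<inter> {..k}"]) auto
    have f2: "(\<Sum>n. if n > k then z n else 0) = (\<Sum>n. z (n + Suc k))"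
      using suminf_minus_initial_segment[OF s2, of "Suc k"] by simp
    show ?thesis unfolding S_def e suminf_add[OF s1 s2, symmetric] f1 f2 ..
  qed
  have ac: "\<exists>f \<in> initial_subsums x y k. (a, c) = f + ((\<Sum>n. x (n + Suc k)), (\<Sum>n. y (n + Suc k)))"
  proof
    show "(sum x (A \<inter> {..k}), sum y (A \<inter> {..k})) \<in> initial_subsums x y k"
      unfolding initial_subsums_def by blast
    show "(a, c) = (sum x (A \<inter> {..k}), sum y (A \<inter> {..k})) + ((\<Sum>n. x (n + Suc k)), (\<Sum>n. y (n + Suc k)))"
      using A tail[OF conv(1) xn] tail[OF conv(2) yn] claim2 gtk by auto
  qed
  show ?thesis using fin ne bd ac unfolding P_def k_def Let_def by auto
qed

end
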